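(* Let $n\ge 1$ be an integer and $\beta>0$. Let $(s,z)$ be the Nielsen–Olesen vortex profile, i.e. real functions on $(0,\infty)$ solving \begin{align*} &s''+\tfrac{s'}{r}-\big[z^2+\tfrac{\beta}{2}(s^2-1)\big]s=0,\\ &z''+\tfrac{z'}{r}-\tfrac{z}{r^2}-zs^2=0, \end{align*} with $s=s_0r^n(1+o(1))$ and $z=\frac{n}{r}+z_0r+o(r)$ as $r\to 0$, and $s\to 1$, $z\to 0$ exponentially as $r\to\infty$. Then the coefficient $z_0$ in the expansion $z=\frac{n}{r}+z_0r+\dots$ near the origin is negative.
   Context: $s$ is the normalized Higgs magnitude and $z-\frac{n}{r}$ the dimensionless azimuthal $Z$ potential of the Nielsen–Olesen vortex with winding number $n$; $\beta=(M_H/M_Z)^2$. *)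

theory Defs
  imports "HOL-Analysis.Analysis" "HOL-Library.Landau_Symbols"
begin

end

theory Submission
  imports Defs "HOL-Real_Asymp.Real_Asymp"
begin

lemma ev_small: "(p::real) > 0 \<Longrightarrow> \<forall>\<^sub>F t in at_right 0. 0 < t \<and> t < p"
  by (subst eventually_at_right[of 0 p]) (auto intro!: exI[of _ p])

lemma ev_left: "(q::real) > 0 \<Longrightarrow> \<forall>\<^sub>F t in at_left q. 0 < t \<and> t < q"
  by (subst eventually_at_left[of 0 q]) (auto intro!: exI[of _ 0])

theorem lemma2:
  fixes n :: nat and \<beta> s0 z0 :: real
    and s s' s'' z z' z'' :: "real \<Rightarrow> real"
  assumes n: "n \<ge> 1" and beta: "\<beta> > 0"
    and ds: "\<And>r. r > 0 \<Longrightarrow> (s has_real_derivative s' r) (at r)"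
    and ds': "\<And>r. r > 0 \<Longrightarrow> (s' has_real_derivative s'' r) (at r)"
    and dz: "\<And>r. r > 0 \<Longrightarrow> (z has_real_derivative z' r) (at r)"
    and dz': "\<And>r. r > 0 \<Longrightarrow> (z' has_real_derivative z'' r) (at r)"
    and eq_s: "\<And>r. r > 0 \<Longrightarrow>
      s'' r + s' r / r - ((z r)^2 + \<beta> / 2 * ((s r)^2 - 1)) * s r = 0"
    and eq_z: "\<And>r. r > 0 \<Longrightarrow>
      z'' r + z' r / r - z r / r^2 - z r * (s r)^2 = 0"
    and s_zero: "(\<lambda>r. s r - s0 * r ^ n) \<in> o[at_right 0](\<lambda>r. s0 * r ^ n)"
    and z_zero: "(\<lambda>r. z r - real n / r - z0 * r) \<in> o[at_right 0](\<lambda>r. r)"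
    and s_inf: "\<exists>C a. a > 0 \<and> (\<forall>\<^sub>F r in at_top. \<bar>s r - 1\<bar> \<le> C * exp (- a * r))"
    and z_inf: "\<exists>C a. a > 0 \<and> (\<forall>\<^sub>F r in at_top. \<bar>z r\<bar> \<le> C * exp (- a * r))"
  shows "z0 < 0"
proof (rule ccontr)
  assume "\<not> z0 < 0"
  hence z0nn: "z0 \<ge> 0" by simp
  define w where "w = (\<lambda>r. r * z r)"
  define Q where "Q = (\<lambda>r. z' r + z r / r)"
  have npos: "real n > 0" using n by simp
  have dw: "(w has_real_derivative r * Q r) (at r)" if r: "r > 0" for r
  proof -
    have "(w has_real_derivative (1 * z r + r * z' r)) (at r)"
      unfolding w_def using DERIV_mult[OF DERIV_ident dz[OF r]] by (simp add: mult.commute)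
    moreover have "1 * z r + r * z' r = r * Q r" using r by (simp add: Q_def field_simps)
    ultimately show ?thesis by simp
  qed
  have dQ: "(Q has_real_derivative z r * (s r)^2) (at r)" if r: "r > 0" for r
  proof -
    have "(Q has_real_derivative (z'' r + (z' r * r - z r * 1) / (r * r))) (at r)"
      unfolding Q_def using r
      by (intro DERIV_add[OF dz'[OF r]] DERIV_divide[OF dz[OF r] DERIV_ident]) auto
    moreover have "z'' r + (z' r * r - z r * 1) / (r * r) = z r * (s r)^2"
    proof -
      have "z'' r = z r / r^2 - z' r / r + z r * (s r)^2" using eq_z[OF r] by linarith
      thus ?thesis using r by (simp add: field_simps power2_eq_square)
    qed
    ultimately show ?thesis by simp
  qed
  have wcont: "isCont w r" if "r > 0" for r using dw[OF that] by (rule DERIV_isCont)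
  have Lim0: "(w \<longlongrightarrow> real n) (at_right 0)"
  proof -
    have e: "((\<lambda>r. (z r - real n / r - z0 * r) / r) \<longlongrightarrow> 0) (at_right 0)"
      using smalloD_tendsto[OF z_zero] .
    have "((\<lambda>r. real n + z0 * r^2 + r^2 * ((z r - real n / r - z0 * r) / r)) \<longlongrightarrow> real n + z0 * 0^2 + 0^2 * 0) (at_right 0)"
      by (intro tendsto_intros e)
    hence L: "((\<lambda>r. real n + z0 * r^2 + r^2 * ((z r - real n / r - z0 * r) / r)) \<longlongrightarrow> real n) (at_right 0)" by simp
    have "\<forall>\<^sub>F r in at_right 0. real n + z0 * r^2 + r^2 * ((z r - real n / r - z0 * r) / r) = w r"
      using eventually_at_right_less[of "0::real"]
    proof eventually_elim
      case (elim r)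
      hence "r^2 * ((z r - real n / r - z0 * r) / r) = r * (z r - real n / r - z0 * r)"
        by (simp add: power2_eq_square)
      also have "\<dots> = r * z r - real n - z0 * r^2"
        using elim by (simp add: right_diff_distrib power2_eq_square)
      finally show ?case by (simp add: w_def)
    qed
    thus ?thesis by (rule tendsto_cong[THEN iffD1, OF _ L])
  qed
  have LimTop: "(w \<longlongrightarrow> 0) at_top"
  proof -
    obtain C a where a: "a > 0" and ev: "\<forall>\<^sub>F r in at_top. \<bar>z r\<bar> \<le> C * exp (- a * r)"
      using z_inf by blast
    have "\<forall>\<^sub>F r in at_top. norm (w r) \<le> r * C * exp (- a * r)"
      using ev eventually_gt_at_top[of "0::real"]
    proof eventually_elim
      case (elim r)
      have "norm (w r) = r * \<bar>z r\<bar>" using elim by (simp add: w_def abs_mult)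
      also have "\<dots> \<le> r * (C * exp (- a * r))" using elim by (intro mult_left_mono) auto
      finally show ?case by simp
    qed
    moreover have "((\<lambda>r. r * C * exp (- a * r)) \<longlongrightarrow> 0) at_top" using a by real_asymp
    ultimately show ?thesis by (rule Lim_null_comparison)
  qed
  have "\<forall>\<^sub>F r in at_top. w r < real n / 2" by (rule order_tendstoD(2)[OF LimTop]) (use npos in simp)
  then obtain N where N: "\<And>r. r \<ge> N \<Longrightarrow> w r < real n / 2" by (auto simp: eventually_at_top_linorder)
  define R where "R = max N 1"
  have R: "R > 0" "w R < real n / 2" using N[of R] by (auto simp: R_def)
  have "\<forall>\<^sub>F r in at_right 0. w r > real n / 2" by (rule order_tendstoD(1)[OF Lim0]) (use npos in simp)
  then obtain b where b: "b > 0" "\<And>y. y > 0 \<Longrightarrow> y < b \<Longrightarrow> w y > real n / 2"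
  proof -
    assume H: "\<And>b. b > 0 \<Longrightarrow> (\<And>y. y > 0 \<Longrightarrow> y < b \<Longrightarrow> w y > real n / 2) \<Longrightarrow> thesis"
    have "\<exists>b>0. \<forall>y>0. y < b \<longrightarrow> w y > real n / 2"
      using \<open>\<forall>\<^sub>F r in at_right 0. w r > real n / 2\<close>
      by (subst (asm) eventually_at_right[of 0 "1::real"]) simp_all
    thus thesis using H by blast
  qed
  define d where "d = b / 2"
  have "R \<ge> b"
  proof (rule ccontr)
    assume "\<not> R \<ge> b"
    hence "w R > real n / 2" using b(2)[of R] R(1) by simp
    thus False using R(2) by simp
  qed
  hence dR: "d \<le> R" "d > 0" "d < b" using b by (auto simp: d_def)
  define S where "S = {x. d \<le> x \<and> x \<le> R \<and> w x \<le> real n / 2}"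
  define rs where "rs = Inf S"
  have RS: "R \<in> S" using R dR by (simp add: S_def)
  have Sne: "S \<noteq> {}" using RS by auto
  have bddS: "bdd_below S" unfolding S_def by (rule bdd_belowI[of _ d]) auto
  have rsd: "rs \<ge> d" unfolding rs_def by (rule cInf_greatest[OF Sne]) (auto simp: S_def)
  have rsR: "rs \<le> R" unfolding rs_def by (rule cInf_lower[OF RS bddS])
  have rspos: "rs > 0" using rsd dR by simp
  have hpos: "w r > real n / 2" if "0 < r" "r < rs" for r
  proof (cases "r < b")
    case True then show ?thesis using b that by auto
  next
    case False
    show ?thesis
    proof (rule ccontr)
      assume "\<not> ?thesis"
      hence "r \<in> S" using False that rsR dR by (auto simp: S_def)
      hence "rs \<le> r" unfolding rs_def by (rule cInf_lower[OF _ bddS])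
      thus False using that by simp
    qed
  qed
  have zpos: "z r > 0" if "0 < r" "r < rs" for r
  proof -
    have "r * z r > 0" using hpos[OF that] npos by (simp add: w_def)
    thus ?thesis using that by (simp add: zero_less_mult_iff)
  qed
  have Qmono: "Q t \<le> Q r" if "0 < t" "t \<le> r" "r < rs" for t r
  proof (rule DERIV_nonneg_imp_nondecreasing[OF that(2)])
    fix x assume x: "t \<le> x" "x \<le> r"
    hence x0: "0 < x" "x < rs" using that by auto
    have "z x * (s x)^2 \<ge> 0" using zpos[OF x0] by simp
    thus "\<exists>y. (Q has_real_derivative y) (at x) \<and> 0 \<le> y" using dQ[OF x0(1)] by blast
  qed
  have QA: "Q r \<ge> 0" if r3: "0 < r" "r < rs" for r
  proof (rule ccontr)
    assume neg: "\<not> Q r \<ge> 0"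
    define c where "c = - Q r"
    have c: "c > 0" using neg by (simp add: c_def)
    define g where "g = (\<lambda>t. w t + c * t^2 / 2)"
    have dg: "(g has_real_derivative x * Q x + c * x) (at x)" if "x > 0" for x
    proof -
      have "((\<lambda>t. c * t^2 / 2) has_real_derivative c * x) (at x)"
        by (auto intro!: derivative_eq_intros)
      thus ?thesis unfolding g_def by (intro DERIV_add dw that)
    qed
    have gdec: "g p \<le> g t" if "0 < t" "t \<le> p" "p \<le> r" for t p
    proof (rule DERIV_nonpos_imp_nonincreasing[OF that(2)])
      fix x assume x: "t \<le> x" "x \<le> p"
      have "Q x \<le> Q r" using Qmono[of x r] x that r3 by auto
      hence "Q x + c \<le> 0" by (simp add: c_def)
      hence "x * (Q x + c) \<le> 0" using x that by (intro mult_nonneg_nonpos) auto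
      hence "x * Q x + c * x \<le> 0" by (simp add: algebra_simps)
      thus "\<exists>y. (g has_real_derivative y) (at x) \<and> y \<le> 0" using dg[of x] x that by auto
    qed
    have gle: "w p + c * p^2 / 2 \<le> real n" if "0 < p" "p \<le> r" for p
    proof -
      have gL: "(g \<longlongrightarrow> real n + c * 0^2 / 2) (at_right 0)"
        unfolding g_def by (intro tendsto_intros Lim0) simp
      have "\<forall>\<^sub>F t in at_right 0. g p \<le> g t"
      proof -
        have "\<forall>\<^sub>F t in at_right 0. 0 < t \<and> t < p"
          using ev_small that by blast
        thus ?thesis by eventually_elim (use gdec that in auto)
      qed
      from tendsto_lowerbound[OF gL this] show ?thesis by (simp add: g_def)
    qed
    have "\<forall>\<^sub>F x in at_right 0. norm (z x - real n / x - z0 * x) \<le> (c/4) * norm x"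
      using landau_o.smallD[OF z_zero, of "c/4"] c by simp
    moreover have "\<forall>\<^sub>F t in at_right 0. 0 < t \<and> t < r"
      using ev_small r3 by blast
    ultimately have "\<forall>\<^sub>F x in at_right 0. norm (z x - real n / x - z0 * x) \<le> (c/4) * norm x \<and> (0 < x \<and> x < r)"
      by (rule eventually_conj)
    then obtain p where elim: "norm (z p - real n / p - z0 * p) \<le> (c/4) * norm p" "0 < p" "p < r"
      using eventually_happens'[OF trivial_limit_at_right_real] by blast
    show False
    proof -
      have h: "p * z p + c * p^2 / 2 \<le> real n" using gle[of p] elim by (simp add: w_def)
      have eq: "p * (z p - real n / p - z0 * p) = p * z p - real n - z0 * p^2"
        using elim by (simp add: right_diff_distrib power2_eq_square)
      have "p * (z p - real n / p - z0 * p) \<le> p * (- c * p / 2)"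
      proof -
        have "z0 * p^2 \<ge> 0" using z0nn by simp
        moreover have "p * (- c * p / 2) = - (c * p^2 / 2)" by (simp add: power2_eq_square)
        ultimately show ?thesis using h eq by linarith
      qed
      hence "z p - real n / p - z0 * p \<le> - c * p / 2"
        using mult_le_cancel_left_pos[OF elim(2)] by blast
      moreover have "\<bar>z p - real n / p - z0 * p\<bar> \<le> c / 4 * p" using elim by simp
      moreover have "c * p > 0" using elim c by simp
      ultimately show False by (simp add: abs_le_iff)
    qed
  qed
  have wge: "w r \<ge> real n" if r: "0 < r" "r < rs" for r
  proof -
    have wmono: "w t \<le> w r" if "0 < t" "t \<le> r" for t
    proof (rule DERIV_nonneg_imp_nondecreasing[OF that(2)])
      fix x assume x: "t \<le> x" "x \<le> r"
      hence x0: "0 < x" "x < rs" using that r by auto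
      have "x * Q x \<ge> 0" using QA[OF x0] x0 by simp
      thus "\<exists>y. (w has_real_derivative y) (at x) \<and> 0 \<le> y" using dw[OF x0(1)] by blast
    qed
    have "\<forall>\<^sub>F t in at_right 0. w t \<le> w r"
    proof -
      have "\<forall>\<^sub>F t in at_right 0. 0 < t \<and> t < r"
        using ev_small r by blast
      thus ?thesis by eventually_elim (use wmono in auto)
    qed
    from tendsto_upperbound[OF Lim0 this] show ?thesis by simp
  qed
  have wrs: "w rs \<ge> real n"
  proof -
    have "(w \<longlongrightarrow> w rs) (at_left rs)"
      using wcont[OF rspos] unfolding isCont_def by (rule tendsto_within_subset) auto
    moreover have "\<forall>\<^sub>F t in at_left rs. real n \<le> w t"
    proof -
      have "\<forall>\<^sub>F t in at_left rs. 0 < t \<and> t < rs"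
        using ev_left rspos by blast
      thus ?thesis by eventually_elim (use wge in auto)
    qed
    ultimately show ?thesis by (rule tendsto_lowerbound) simp
  qed
  have "\<forall>\<^sub>F t in at rs. w t > real n / 2"
    by (rule order_tendstoD(1)[OF wcont[OF rspos, unfolded isCont_def]]) (use wrs npos in simp)
  hence "\<exists>e>0. \<forall>t\<in>UNIV. t \<noteq> rs \<and> dist t rs < e \<longrightarrow> w t > real n / 2"
    by (simp only: eventually_at)
  then obtain e where e: "e > 0" "\<And>t. t \<noteq> rs \<Longrightarrow> dist t rs < e \<Longrightarrow> w t > real n / 2"
    by blast
  have "Inf S < rs + e" using e by (simp add: rs_def)
  then obtain x where x: "x \<in> S" "x < rs + e" using cInf_lessD[OF Sne] by blast
  have "rs \<le> x" unfolding rs_def by (rule cInf_lower[OF x(1) bddS])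
  hence "w x > real n / 2"
    using e x wrs npos by (cases "x = rs") (auto simp: dist_real_def)
  thus False using x by (simp add: S_def)
qed

end
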